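(* Let $n,d,c\in\mathbb{N}$ with $d\ge 50$ and $1\le c\le d$, and let $\mathcal{F}\subseteq 2^{[n]}$ be a hereditary family with $\delta(\mathcal{F})\ge 2^{d-1}-c+1$. If $P\subseteq[n]$ is an isolated pile of $\mathcal{F}$, then $\sum_{x\in P}\omega_{\mathcal{F}}(x)\ge \mathfrak{B}_c\, d$.
   Context: A family $\mathcal{F}\subseteq 2^{[n]}$ is hereditary if $F'\subseteq F\in\mathcal{F}$ implies $F'\in\mathcal{F}$. $d_{\mathcal{F}}(x)=|\{F\in\mathcal{F}:x\in F\}|$, $\delta(\mathcal{F})=\min_x d_{\mathcal{F}}(x)$, $N(x)=\bigcup_{x\in F\in\mathcal{F}}F$. The weight of $x$ is $\omega_{\mathcal{F}}(x)=\sum_{x\in F\in\mathcal{F}}\frac{1}{|F|}$. For $1\le c\le d$, $\mathfrak{B}_c=\frac{2^d-c}{d}$ if $1\le c\le d-1$ and $\mathfrak{B}_d=\frac{2^d-d-\frac12}{d}$. A set $P\subseteq[n]$ with $|P|=d$ is a pile of $\mathcal{F}$ if $P\subseteq N(y)$ for every $y\in P$, and there exists $z\in P$ with $N(z)=P$. A pile is isolated if it is disjoint from every other pile of $\mathcal{F}$. *)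

theory Defs
  imports Complex_Main
begin

definition hereditary :: "nat set set \<Rightarrow> bool" where
  "hereditary \<F> \<longleftrightarrow> (\<forall>F\<in>\<F>. \<forall>F'. F' \<subseteq> F \<longrightarrow> F' \<in> \<F>)"

definition deg :: "nat set set \<Rightarrow> nat \<Rightarrow> nat" where
  "deg \<F> x = card {F\<in>\<F>. x \<in> F}"

definition min_deg :: "nat \<Rightarrow> nat set set \<Rightarrow> nat" where
  "min_deg n \<F> = Min (deg \<F> ` {1..n})"

definition nbhd :: "nat set set \<Rightarrow> nat \<Rightarrow> nat set" where
  "nbhd \<F> x = \<Union>{F\<in>\<F>. x \<in> F}"

definition weight :: "nat set set \<Rightarrow> nat \<Rightarrow> real" where
  "weight \<F> x = (\<Sum>F\<in>{F\<in>\<F>. x \<in> F}. 1 / real (card F))"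

definition frakB :: "nat \<Rightarrow> nat \<Rightarrow> real" where
  "frakB d c = (if 1 \<le> c \<and> c \<le> d - 1 then (2 ^ d - real c) / real d
                else (2 ^ d - real d - 1/2) / real d)"

definition is_pile :: "nat \<Rightarrow> nat \<Rightarrow> nat set set \<Rightarrow> nat set \<Rightarrow> bool" where
  "is_pile n d \<F> P \<longleftrightarrow> P \<subseteq> {1..n} \<and> card P = d \<and>
     (\<forall>y\<in>P. P \<subseteq> nbhd \<F> y) \<and> (\<exists>z\<in>P. nbhd \<F> z = P)"

definition isolated_pile :: "nat \<Rightarrow> nat \<Rightarrow> nat set set \<Rightarrow> nat set \<Rightarrow> bool" where
  "isolated_pile n d \<F> P \<longleftrightarrow> is_pile n d \<F> P \<and>
     (\<forall>Q. is_pile n d \<F> Q \<and> Q \<noteq> P \<longrightarrow> P \<inter> Q = {})"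

end

theory Submission
  imports Defs
begin


lemma card_subsets_containing:
  assumes "finite P" "x \<in> P"
  shows "card {S. S \<subseteq> P \<and> x \<in> S} = 2 ^ (card P - 1)"
proof -
  have eq: "{S. S \<subseteq> P \<and> x \<in> S} = insert x ` Pow (P - {x})" 
  proof
    show "{S. S \<subseteq> P \<and> x \<in> S} \<subseteq> insert x ` Pow (P - {x})"
    proof
      fix S assume "S \<in> {S. S \<subseteq> P \<and> x \<in> S}"
      then have "S = insert x (S - {x})" "S - {x} \<in> Pow (P - {x})" by auto
      then show "S \<in> insert x ` Pow (P - {x})" by blast
    qed
    show "insert x ` Pow (P - {x}) \<subseteq> {S. S \<subseteq> P \<and> x \<in> S}" using assms by auto
  qed
  have inj: "inj_on (insert x) (Pow (P - {x}))"
    by (rule inj_onI) (metis Diff_insert_absorb PowD subset_Diff_insert)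
  show ?thesis unfolding eq using assms
    by (simp add: card_image[OF inj] card_Pow)
qed

lemma card_supersets:
  assumes "finite P" "S \<subseteq> P"
  shows "card {S'. S \<subseteq> S' \<and> S' \<subseteq> P} = 2 ^ card (P - S)"
proof -
  have eq: "{S'. S \<subseteq> S' \<and> S' \<subseteq> P} = (\<lambda>T. S \<union> T) ` Pow (P - S)"
  proof
    show "{S'. S \<subseteq> S' \<and> S' \<subseteq> P} \<subseteq> (\<lambda>T. S \<union> T) ` Pow (P - S)"
    proof
      fix S' assume "S' \<in> {S'. S \<subseteq> S' \<and> S' \<subseteq> P}"
      then have "S' = S \<union> (S' - S)" "S' - S \<in> Pow (P - S)" by auto
      then show "S' \<in> (\<lambda>T. S \<union> T) ` Pow (P - S)" by blast
    qed
    show "(\<lambda>T. S \<union> T) ` Pow (P - S) \<subseteq> {S'. S \<subseteq> S' \<and> S' \<subseteq> P}" using assms by auto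
  qed
  have inj: "inj_on (\<lambda>T. S \<union> T) (Pow (P - S))"
    by (rule inj_onI) auto
  show ?thesis unfolding eq using assms
    by (simp add: card_image[OF inj] card_Pow)
qed

lemma card_filter_split:
  assumes "finite A"
  shows "card {a\<in>A. Q a} + card {a\<in>A. \<not> Q a} = card A"
proof -
  have "A = {a\<in>A. Q a} \<union> {a\<in>A. \<not> Q a}" by auto
  then show ?thesis using assms
    by (metis (no_types, lifting) card_Un_disjoint disjoint_iff finite_Un mem_Collect_eq)
qed

lemma pow_bound: "(j::nat) \<ge> 6 \<Longrightarrow> 7 * (j + 2) \<le> 2 ^ j + 4"
proof (induction j rule: dec_induct)
  case base then show ?case by simp
next
  case (step j)
  have "(2::nat) ^ 6 \<le> 2 ^ j" using power_increasing[of 6 j "2::nat"] step.hyps(1) by simp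
  then have "7 \<le> (2::nat) ^ j" by simp
  then show ?case using step.IH by simp
qed

lemma exists_k:
  assumes "d \<ge> (50::nat)"
  shows "\<exists>k. 2 * d \<le> 2 ^ k \<and> 7 * k \<le> d + 4"
proof -
  define k where "k = (LEAST k. 2 * d \<le> 2 ^ k)"
  have ex: "2 * d \<le> 2 ^ (2 * d)" by (metis less_exp less_imp_le)
  have k1: "2 * d \<le> 2 ^ k" unfolding k_def by (rule LeastI[of _ "2*d"]) (rule ex)
  have k0: "k \<ge> 1" using k1 assms by (cases k) auto
  have "\<not> 2 * d \<le> 2 ^ (k - 1)" unfolding k_def
    by (rule not_less_Least) (use k0 k_def in simp)
  then have lt: "2 ^ (k - 1) < 2 * d" by simp
  have "7 * k \<le> d + 4"
  proof (cases "k \<le> 7")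
    case True then show ?thesis using assms by simp
  next
    case False
    then have "7 * ((k - 2) + 2) \<le> 2 ^ (k - 2) + 4" using pow_bound[of "k-2"] by simp
    moreover have "2 ^ (k - 1) = 2 * (2::nat) ^ (k - 2)"
    proof -
      have "k - 1 = Suc (k - 2)" using False by simp
      then show ?thesis by simp
    qed
    ultimately show ?thesis using lt False by simp
  qed
  then show ?thesis using k1 by blast
qed



lemma cost_bound:
  fixes \<F> :: "nat set set" and P :: "nat set"
  assumes fin: "finite \<F>" and finF: "\<forall>F\<in>\<F>. finite F" and her: "hereditary \<F>"
    and xP: "x \<in> P"
  shows "real (min (card {F\<in>\<F>. x\<in>F \<and> \<not> F \<subseteq> P}) (2^k)) / real (k+2)
          \<le> (\<Sum>F\<in>{F\<in>\<F>. x\<in>F \<and> \<not> F \<subseteq> P}. 1 / real (card F))"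
proof -
  let ?O = "{F\<in>\<F>. x\<in>F \<and> \<not> F \<subseteq> P}"
  have finO: "finite ?O" using fin by simp
  have nonneg: "\<And>F. 0 \<le> 1 / real (card F)" by simp
  show ?thesis
  proof (cases "\<forall>F\<in>?O. card F \<le> k+1")
    case True
    have "real (card ?O) / real (k+2) = (\<Sum>F\<in>?O. 1/real(k+2))" by simp
    also have "\<dots> \<le> (\<Sum>F\<in>?O. 1/real(card F))"
    proof (rule sum_mono)
      fix F assume F: "F \<in> ?O"
      then have "finite F" "x \<in> F" using finF by auto
      then have "card F \<ge> 1" by (metis One_nat_def Suc_leI card_gt_0_iff empty_iff)
      moreover have "card F \<le> k + 2" using True F by auto
      ultimately show "1/real(k+2) \<le> 1/real(card F)"
        by (simp add: frac_le)
    qed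
    finally have "real (card ?O) / real (k+2) \<le> (\<Sum>F\<in>?O. 1/real(card F))" .
    moreover have "real (min (card ?O) (2^k)) / real (k+2) \<le> real (card ?O) / real (k+2)"
      by (simp add: divide_right_mono)
    ultimately show ?thesis by linarith
  next
    case False
    then obtain F where F0: "F \<in> ?O" "\<not> card F \<le> k+1" by blast
    then have F: "F\<in>\<F>" "x\<in>F" "\<not>F\<subseteq>P" "card F \<ge> k+2" by auto
    obtain w where w: "w\<in>F" "w\<notin>P" using F by auto
    have xw: "x \<noteq> w" using xP w by auto
    have finFF: "finite F" using finF F by auto
    have "card (F - {x,w}) = card F - 2" using F(2) w(1) xw finFF by (simp add: card_Diff_subset)
    then have "card (F - {x,w}) \<ge> k" using F(4) by simp
    then obtain T where T: "T \<subseteq> F - {x,w}" "card T = k"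
      using obtain_subset_with_card_n by metis
    have finT: "finite T" using T finFF by (meson finite_Diff finite_subset)
    define G where "G = (\<lambda>R. insert x (insert w R)) ` Pow T"
    have inj: "inj_on (\<lambda>R. insert x (insert w R)) (Pow T)"
    proof (rule inj_onI)
      fix R R' assume RR: "R \<in> Pow T" "R' \<in> Pow T" and eq: "insert x (insert w R) = insert x (insert w R')"
      have "x \<notin> T" "w \<notin> T" using T by auto
      then have "R = insert x (insert w R) - {x,w}" "R' = insert x (insert w R') - {x,w}" using RR by auto
      then show "R = R'" using eq by simp
    qed
    have cardG: "card G = 2^k" unfolding G_def using card_image[OF inj] finT T by (simp add: card_Pow)
    have GO: "G \<subseteq> ?O"
    proof
      fix H assume "H \<in> G"
      then obtain R where R: "R \<subseteq> T" "H = insert x (insert w R)" unfolding G_def by auto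
      then have "H \<subseteq> F" using T F(2) w(1) by auto
      then have "H \<in> \<F>" using her F(1) unfolding hereditary_def by blast
      then show "H \<in> ?O" using R w by auto
    qed
    have "real (2^k) / real (k+2) = (\<Sum>H\<in>G. 1/real(k+2))" using cardG by simp
    also have "\<dots> \<le> (\<Sum>H\<in>G. 1/real(card H))"
    proof (rule sum_mono)
      fix H assume "H \<in> G"
      then obtain R where R: "R \<subseteq> T" "H = insert x (insert w R)" unfolding G_def by auto
      have finR: "finite R" using R finT finite_subset by auto
      have "card R \<le> k" using R T finT card_mono by metis
      moreover have "card H \<le> Suc (Suc (card R))" using R finR by (simp add: card_insert_if)
      ultimately have "card H \<le> k + 2" by simp
      moreover have "card H \<ge> 1" using R finR by (simp add: card_gt_0_iff Suc_leI)
      ultimately show "1/real(k+2) \<le> 1/real(card H)" by (simp add: frac_le)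
    qed
    also have "\<dots> \<le> (\<Sum>H\<in>?O. 1/real(card H))"
      by (rule sum_mono2[OF finO GO]) simp
    finally have "real (2^k) / real (k+2) \<le> (\<Sum>H\<in>?O. 1/real(card H))" .
    moreover have "real (min (card ?O) (2^k)) / real (k+2) \<le> real (2^k) / real (k+2)"
      by (simp add: divide_right_mono)
    ultimately show ?thesis by linarith
  qed
qed

lemma comb:
  fixes P :: "nat set" and M :: "nat set set" and cost :: "nat \<Rightarrow> real" and ov :: "nat \<Rightarrow> nat"
    and d c z :: nat
  assumes d50: "d \<ge> 50" and c1: "1 \<le> c" and cd: "c \<le> d"
    and finP: "finite P" and cardP: "card P = d"
    and MP: "M \<subseteq> Pow P"
    and up: "\<And>S S'. S \<in> M \<Longrightarrow> S \<subseteq> S' \<Longrightarrow> S' \<subseteq> P \<Longrightarrow> S' \<in> M"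
    and zP: "z \<in> P" and oz: "ov z = 0"
    and cost: "\<And>x k. x \<in> P \<Longrightarrow> real (min (ov x) (2^k)) / real (k+2) \<le> cost x"
    and ob: "\<And>x. x \<in> P \<Longrightarrow> card {S\<in>M. x\<in>S} \<le> ov x + (c - 1)"
  shows "real (card M) + 1 - real c - (if c = d then 1/2 else 0) \<le> (\<Sum>x\<in>P. cost x)"
proof -
  have finM: "finite M" using MP finP by (meson finite_Pow_iff finite_subset)
  define m where "m = card M"
  define \<delta> where "\<delta> x = card {S\<in>M. x \<notin> S}" for x
  have msplit: "\<And>x. card {S\<in>M. x\<in>S} + \<delta> x = m"
    unfolding \<delta>_def m_def using card_filter_split[OF finM] by blast
  have cnn: "0 \<le> cost x" if "x \<in> P" for x
  proof -
    have "0 \<le> real (min (ov x) (2^0)) / real (0+2)" by simp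
    then show ?thesis using cost[OF that, of 0] by linarith
  qed
  have sumnn: "0 \<le> (\<Sum>x\<in>P. cost x)" using cnn by (simp add: sum_nonneg)
  have mz: "card {S\<in>M. z\<in>S} \<le> c - 1" using ob[OF zP] oz by simp
  have dz: "\<delta> z \<le> card {S\<in>M. z\<in>S}"
    unfolding \<delta>_def
  proof (rule card_inj_on_le)
    show "inj_on (insert z) {S \<in> M. z \<notin> S}"
      by (rule inj_onI) (metis (no_types, lifting) Diff_insert_absorb mem_Collect_eq)
    show "insert z ` {S \<in> M. z \<notin> S} \<subseteq> {S \<in> M. z \<in> S}"
    proof
      fix T assume "T \<in> insert z ` {S \<in> M. z \<notin> S}"
      then obtain S where S: "S \<in> M" "T = insert z S" by auto
      have "S \<subseteq> P" using S MP by auto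
      then have "insert z S \<in> M" using up[OF S(1) subset_insertI] zP by blast
      then have "T \<in> M" using S by simp
      then show "T \<in> {S \<in> M. z \<in> S}" using S by auto
    qed
    show "finite {S \<in> M. z \<in> S}" using finM by simp
  qed
  have m2: "m \<le> 2*(c-1)" using msplit[of z] mz dz by linarith
  show ?thesis
  proof (cases "m + 1 \<le> c")
    case True
    have "real (card M) + 1 - real c \<le> 0" using True m_def by simp
    moreover have "(if c = d then 1/2 else 0) \<ge> (0::real)" by simp
    ultimately show ?thesis using sumnn by linarith
  next
    case False
    define e where "e = m + 1 - c"
    have e1: "e \<ge> 1" and me: "m + 1 = e + c" using False e_def by auto
    have target: "real (card M) + 1 - real c - (if c = d then 1/2 else 0) \<le> real e"
    proof -
      have "real (card M) + 1 - real c = real e" using me m_def by simp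
      moreover have "(if c = d then 1/2 else 0) \<ge> (0::real)" by simp
      ultimately show ?thesis by linarith
    qed
    have "M \<noteq> {}" using False m_def c1 by (metis card.empty add_0 le_add2)
    then obtain S0 where "S0 \<in> M" by blast
    then have PM: "P \<in> M" using up MP by blast
    have half: "1/2 \<le> cost x" if xP: "x \<in> P" and dx: "\<delta> x < e" for x
    proof -
      have "card {S\<in>M. x\<in>S} \<ge> c" using msplit[of x] dx me by linarith
      then have "ov x \<ge> 1" using ob[OF xP] c1 by linarith
      then have "min (ov x) (2^0) = 1" by simp
      then show ?thesis using cost[OF xP, of 0] by simp
    qed
    define B where "B = {x\<in>P. e \<le> \<delta> x}"
    have BP: "B \<subseteq> P" unfolding B_def by auto
    have finB: "finite B" using BP finP finite_subset by auto
    have cBd: "card B \<le> d" using card_mono[OF finP BP] cardP by simp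
    have halfsum: "(real d - real (card B)) / 2 \<le> (\<Sum>x\<in>P. cost x)"
    proof -
      have "(real d - real (card B)) / 2 = (\<Sum>x\<in>P - B. 1/2)"
        using card_Diff_subset[OF finB BP] cardP cBd by (simp add: of_nat_diff)
      also have "\<dots> \<le> (\<Sum>x\<in>P - B. cost x)"
        by (rule sum_mono) (use half in \<open>auto simp: B_def\<close>)
      also have "\<dots> \<le> (\<Sum>x\<in>P. cost x)"
        by (rule sum_mono2[OF finP]) (use cnn in auto)
      finally show ?thesis .
    qed
    have sing: "P - {x} \<in> M" if "x \<in> P" "1 \<le> \<delta> x" for x
    proof -
      have "{S\<in>M. x \<notin> S} \<noteq> {}" using that(2) unfolding \<delta>_def by (metis card.empty not_one_le_zero)
      then obtain S where "S \<in> M" "x \<notin> S" by blast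
      moreover have "S \<subseteq> P" using \<open>S \<in> M\<close> MP by auto
      ultimately show ?thesis using up[of S "P - {x}"] by auto
    qed
    have injB: "inj_on (\<lambda>x. P - {x}) B"
      by (rule inj_onI) (use BP in blast)
    have PnotB: "P \<notin> (\<lambda>x. P - {x}) ` B" using BP by auto
    have BM: "(\<lambda>x. P - {x}) ` B \<subseteq> M" using sing e1 by (auto simp: B_def)
    show ?thesis
    proof (cases "e = 1")
      case True
      have "card (insert P ((\<lambda>x. P - {x}) ` B)) \<le> m"
        unfolding m_def by (rule card_mono[OF finM]) (use PM BM in auto)
      then have "1 + card B \<le> m" using PnotB finB card_image[OF injB] by simp
      then have "card B + 1 \<le> c" using True me by simp
      moreover have "card M = c" using True me m_def by simp
      ultimately show ?thesis using halfsum cd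
      proof (cases "c = d")
        case True
        then show ?thesis using halfsum \<open>card M = c\<close> \<open>card B + 1 \<le> c\<close> by simp
      next
        case False
        then have "c + 1 \<le> d" using cd by simp
        then show ?thesis using halfsum \<open>card M = c\<close> \<open>card B + 1 \<le> c\<close> False by simp
      qed
    next
      case False
      then have e2: "e \<ge> 2" using e1 by simp
      show ?thesis
      proof (cases "5*e \<le> d + 2")
        case True
        define W where "W x = {w\<in>P. w \<noteq> x \<and> P - {x,w} \<in> M}" for x
        have finW: "finite (W x)" for x using finP unfolding W_def by simp
        have \<delta>W: "\<delta> x \<le> 2 ^ card (W x)" if xP: "x \<in> P" for x
        proof -
          have "\<delta> x \<le> card (Pow (W x))" unfolding \<delta>_def
          proof (rule card_inj_on_le)
            show "inj_on (\<lambda>S. (P - S) - {x}) {S\<in>M. x \<notin> S}"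
            proof (rule inj_onI)
              fix S S' assume S: "S \<in> {S\<in>M. x \<notin> S}" and S': "S' \<in> {S\<in>M. x \<notin> S}"
                and eq: "(P - S) - {x} = (P - S') - {x}"
              have "S \<subseteq> P" "S' \<subseteq> P" using S S' MP by auto
              then have "S = P - ((P - S) - {x}) - {x}" "S' = P - ((P - S') - {x}) - {x}"
                using S S' by auto
              then show "S = S'" using eq by simp
            qed
            show "(\<lambda>S. (P - S) - {x}) ` {S\<in>M. x \<notin> S} \<subseteq> Pow (W x)"
            proof
              fix T assume "T \<in> (\<lambda>S. (P - S) - {x}) ` {S\<in>M. x \<notin> S}"
              then obtain S where S: "S \<in> M" "x \<notin> S" "T = (P - S) - {x}" by auto
              have SP: "S \<subseteq> P" using S MP by auto
              have "w \<in> W x" if "w \<in> T" for w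
              proof -
                have w: "w \<in> P" "w \<noteq> x" "w \<notin> S" using that S by auto
                have "S \<subseteq> P - {x,w}" using SP w S by auto
                then have "P - {x,w} \<in> M" using up[OF S(1)] by blast
                then show ?thesis using w unfolding W_def by auto
              qed
              then show "T \<in> Pow (W x)" by auto
            qed
            show "finite (Pow (W x))" using finW by simp
          qed
          then show ?thesis using finW by (simp add: card_Pow)
        qed
        define E where "E = {(x,w). x\<in>P \<and> w\<in>P \<and> x\<noteq>w \<and> P - {x,w} \<in> M}"
        define EL where "EL = {(x,w). x\<in>P \<and> w\<in>P \<and> x<w \<and> P - {x,w} \<in> M}"
        have "E \<subseteq> P \<times> P" unfolding E_def by auto
        then have finE: "finite E" using finite_cartesian_product[OF finP finP] finite_subset by blast
        have finEL: "finite EL"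
          by (rule finite_subset[OF _ finE]) (auto simp: E_def EL_def)
        have Eeq: "E = EL \<union> prod.swap ` EL"
        proof
          show "E \<subseteq> EL \<union> prod.swap ` EL"
          proof
            fix p assume "p \<in> E"
            then obtain x w where p: "p = (x,w)" "x\<in>P" "w\<in>P" "x\<noteq>w" "P - {x,w} \<in> M"
              unfolding E_def by auto
            show "p \<in> EL \<union> prod.swap ` EL"
            proof (cases "x < w")
              case True then show ?thesis using p unfolding EL_def by auto
            next
              case False
              then have "w < x" using p by simp
              moreover have "{w,x} = {x,w}" by auto
              ultimately have "(w,x) \<in> EL" using p unfolding EL_def by auto
              moreover have "(x,w) = prod.swap (w,x)" by simp
              ultimately have "(x,w) \<in> prod.swap ` EL" by blast
              then show ?thesis using p by simp
            qed
          qed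
          show "EL \<union> prod.swap ` EL \<subseteq> E"
            unfolding E_def EL_def by (auto simp: insert_commute)
        qed
        have disj: "EL \<inter> prod.swap ` EL = {}" unfolding EL_def by auto
        have cardE: "card E = 2 * card EL"
        proof -
          have "card (prod.swap ` EL) = card EL" by (rule card_image) (auto simp: inj_on_def prod.swap_def)
          then show ?thesis using Eeq disj finEL by (simp add: card_Un_disjoint)
        qed
        have SigE: "Sigma B W \<subseteq> E" unfolding E_def W_def B_def by auto
        have cardSig: "(\<Sum>x\<in>B. card (W x)) \<le> card E"
        proof -
          have "card (Sigma B W) = (\<Sum>x\<in>B. card (W x))" using finB finW by simp
          moreover have "card (Sigma B W) \<le> card E" by (rule card_mono[OF finE SigE])
          ultimately show ?thesis by simp
        qed
        define f where "f = (\<lambda>(x::nat,w::nat). P - {x,w})"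
        have injEL: "inj_on f EL"
        proof (rule inj_onI)
          fix p q assume p: "p \<in> EL" and q: "q \<in> EL" and eq: "f p = f q"
          obtain x w where pp: "p = (x,w)" "x\<in>P" "w\<in>P" "x<w" using p unfolding EL_def by auto
          obtain x' w' where qq: "q = (x',w')" "x'\<in>P" "w'\<in>P" "x'<w'" using q unfolding EL_def by auto
          have "P - {x,w} = P - {x',w'}" using eq pp qq unfolding f_def by simp
          then have "{x,w} = {x',w'}" using pp qq by blast
          then have "(x = x' \<and> w = w') \<or> (x = w' \<and> w = x')" by (simp add: doubleton_eq_iff)
          then show "p = q" using pp qq by auto
        qed
        have fEL: "f ` EL \<subseteq> M" unfolding f_def EL_def by auto
        have fdisj: "f ` EL \<inter> insert P ((\<lambda>x. P - {x}) ` B) = {}"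
        proof -
          have "f p \<noteq> P" if "p \<in> EL" for p using that unfolding f_def EL_def by auto
          moreover have "f p \<noteq> P - {y}" if pEL: "p \<in> EL" and yB: "y \<in> B" for p y
          proof
            assume a: "f p = P - {y}"
            obtain x w where pp: "p = (x,w)" "x\<in>P" "w\<in>P" "x<w" using pEL unfolding EL_def by auto
            have "x \<notin> P - {y}" "w \<notin> P - {y}" using a pp unfolding f_def by auto
            then show False using pp by auto
          qed
          ultimately show ?thesis by auto
        qed
        have cnt: "1 + card B + card EL \<le> m"
        proof -
          have "card (insert P ((\<lambda>x. P - {x}) ` B) \<union> f ` EL) \<le> m"
            unfolding m_def by (rule card_mono[OF finM]) (use PM BM fEL in auto)
          moreover have "card (insert P ((\<lambda>x. P - {x}) ` B) \<union> f ` EL)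
              = card (insert P ((\<lambda>x. P - {x}) ` B)) + card (f ` EL)"
            by (rule card_Un_disjoint) (use finB finEL fdisj in auto)
          moreover have "card (insert P ((\<lambda>x. P - {x}) ` B)) = 1 + card B"
            using PnotB finB card_image[OF injB] by simp
          moreover have "card (f ` EL) = card EL" by (rule card_image[OF injEL])
          ultimately show ?thesis by simp
        qed
        have W1: "1 \<le> card (W x)" if "x \<in> B" for x
        proof (rule ccontr)
          assume "\<not> 1 \<le> card (W x)"
          then have "card (W x) = 0" by simp
          then have "\<delta> x \<le> 1" using \<delta>W[of x] that BP by auto
          then show False using that e2 unfolding B_def by auto
        qed
        show ?thesis
        proof (cases "e = 2")
          case True
          have "(\<Sum>x\<in>B. 1) \<le> (\<Sum>x\<in>B. card (W x))" by (rule sum_mono) (use W1 in auto)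
          then have "card B \<le> 2 * card EL" using cardSig cardE by simp
          moreover have "m \<le> d + 1" using me True cd by simp
          ultimately have "3 * card B \<le> 2 * d" using cnt by linarith
          then have "4 \<le> real d - real (card B)" using d50 by linarith
          then have "2 \<le> (real d - real (card B)) / 2" by simp
          then have "2 \<le> (\<Sum>x\<in>P. cost x)" using halfsum by (rule order_trans)
          then show ?thesis using target True by simp
        next
          case False
          then have e3: "e \<ge> 3" using e2 by simp
          have W2: "2 \<le> card (W x)" if "x \<in> B" for x
          proof (rule ccontr)
            assume "\<not> 2 \<le> card (W x)"
            then have "card (W x) \<le> 1" by simp
            then have "(2::nat) ^ card (W x) \<le> 2 ^ 1" by (rule power_increasing) simp
            then have "\<delta> x \<le> 2" using \<delta>W[of x] that BP by auto
            then show False using that e3 unfolding B_def by auto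
          qed
          have "(\<Sum>x\<in>B. 2) \<le> (\<Sum>x\<in>B. card (W x))" by (rule sum_mono) (use W2 in auto)
          then have "card B \<le> card EL" using cardSig cardE by simp
          moreover have "m + 1 \<le> e + d" using me cd by simp
          ultimately have "2 * card B + 2 \<le> e + d" using cnt by linarith
          then have "2 * e + card B \<le> d" using True by linarith
          then have "2 * real e + real (card B) \<le> real d" by linarith
          then have "real e \<le> (real d - real (card B)) / 2" by simp
          then show ?thesis using halfsum target by linarith
        qed
      next
        case False
        then have e5: "d + 3 \<le> 5 * e" by simp
        obtain k where k: "2*d \<le> 2^k" "7*k \<le> d + 4" using exists_k[OF d50] by blast
        have mk: "m < 2^k" using m2 cd c1 k(1) by linarith
        have ek: "e \<le> 2^k" using me c1 mk by linarith
        have k1: "k \<ge> 1" using k(1) d50 by (cases k) auto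
        have sizeS: "card (P - S) \<le> k - 1" if SM: "S \<in> M" for S
        proof -
          have SP: "S \<subseteq> P" using SM MP by auto
          have "{S'. S \<subseteq> S' \<and> S' \<subseteq> P} \<subseteq> M" using up[OF SM] by blast
          then have "card {S'. S \<subseteq> S' \<and> S' \<subseteq> P} \<le> m" unfolding m_def by (rule card_mono[OF finM])
          then have "(2::nat) ^ card (P - S) \<le> m" using card_supersets[OF finP SP] by simp
          then have "(2::nat) ^ card (P - S) < 2 ^ k" using mk by (rule le_less_trans)
          then have "card (P - S) < k" by simp
          then show ?thesis by simp
        qed
        have sum\<delta>: "(\<Sum>x\<in>P. \<delta> x) = (\<Sum>S\<in>M. card (P - S))"
        proof -
          have "(\<Sum>x\<in>P. \<delta> x) = (\<Sum>x\<in>P. \<Sum>S\<in>{S. S \<in> M \<and> x \<notin> S}. (1::nat))"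
            unfolding \<delta>_def by simp
          also have "\<dots> = (\<Sum>S\<in>M. \<Sum>x\<in>{x. x \<in> P \<and> x \<notin> S}. (1::nat))"
            by (rule sum.swap_restrict[OF finP finM])
          also have "\<dots> = (\<Sum>S\<in>M. card (P - S))"
            by (rule sum.cong) (auto simp: set_diff_eq)
          finally show ?thesis .
        qed
        have sum\<delta>le: "(\<Sum>x\<in>P. \<delta> x) \<le> m * (k - 1)"
        proof -
          have "(\<Sum>S\<in>M. card (P - S)) \<le> card M * (k - 1)"
            using sum_bounded_above[of M "\<lambda>S. card (P - S)" "k - 1"] sizeS by simp
          then show ?thesis using sum\<delta> m_def by simp
        qed
        have per: "(real e - real (\<delta> x)) / real (k+2) \<le> cost x" if xP: "x \<in> P" for x
        proof -
          have "card {S\<in>M. x\<in>S} \<le> ov x + (c - 1)" by (rule ob[OF xP])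
          then have "e \<le> ov x + \<delta> x" using msplit[of x] me c1 by linarith
          then have r1: "real e \<le> real (ov x) + real (\<delta> x)" by linarith
          have r2: "real e \<le> real ((2::nat) ^ k)" using ek by (simp only: of_nat_le_iff)
          have "real e - real (\<delta> x) \<le> real (min (ov x) (2^k))"
          proof (cases "ov x \<le> 2^k")
            case True
            then have "min (ov x) (2^k) = ov x" by simp
            then show ?thesis using r1 by simp
          next
            case False
            then have "min (ov x) (2^k) = 2^k" by simp
            then have "real (min (ov x) (2^k)) = real ((2::nat)^k)" by (simp only:)
            then show ?thesis using r2 by linarith
          qed
          then have "(real e - real (\<delta> x)) / real (k+2) \<le> real (min (ov x) (2^k)) / real (k+2)"
            by (simp add: divide_right_mono)
          then show ?thesis using cost[OF xP, of k] by linarith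
        qed
        have "(\<Sum>x\<in>P. (real e - real (\<delta> x)) / real (k+2)) \<le> (\<Sum>x\<in>P. cost x)"
          by (rule sum_mono) (rule per)
        moreover have "(\<Sum>x\<in>P. (real e - real (\<delta> x)) / real (k+2))
            = (real d * real e - real (\<Sum>x\<in>P. \<delta> x)) / real (k+2)"
          by (simp add: sum_divide_distrib[symmetric] sum_subtractf cardP)
        moreover have "real e * real (k+2) \<le> real d * real e - real (\<Sum>x\<in>P. \<delta> x)"
        proof -
          define s where "s = (\<Sum>x\<in>P. \<delta> x)"
          have i1: "int s \<le> int m * (int k - 1)" using sum\<delta>le k1 unfolding s_def
            by (metis of_nat_1 of_nat_diff of_nat_le_iff of_nat_mult)
          have i2: "int m + 1 = int e + int c" using me by simp
          have i3: "int c \<le> int d" "7 * int k \<le> int d + 4" "int d + 3 \<le> 5 * int e" "int k \<ge> 1" "int d \<ge> 50"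
            using cd k(2) e5 k1 d50 by linarith+
          have A: "5 * (int k - 1) \<le> int d - 2 * int k - 1" using i3 by (smt (verit))
          have B: "int e * (5 * (int k - 1)) \<le> int e * (int d - 2 * int k - 1)"
            by (rule mult_left_mono[OF A]) simp
          have C: "(int d - 1) * (int k - 1) \<le> (5 * int e) * (int k - 1)"
            by (rule mult_right_mono) (use i3 in linarith)+
          have D: "int m * (int k - 1) \<le> (int e + int d - 1) * (int k - 1)"
            by (rule mult_right_mono) (use i2 i3 in linarith)+
          have E1: "(int e + int d - 1) * (int k - 1) + int e * (int k + 2)
              = int e * (2 * int k + 1) + (int d - 1) * (int k - 1)" by (simp add: algebra_simps)
          have E2: "int e * (2 * int k + 1) + int e * (int d - 2 * int k - 1) = int e * int d"
            by (simp add: algebra_simps)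
          have E3: "int e * (5 * (int k - 1)) = (5 * int e) * (int k - 1)" by (simp add: algebra_simps)
          have "int s + int e * (int k + 2) \<le> int d * int e"
          proof -
            have C': "(int d - 1) * (int k - 1) \<le> int e * (5 * (int k - 1))" using C by (subst E3)
            have E2': "int e * (2 * int k + 1) + int e * (int d - 2 * int k - 1) = int d * int e"
              by (simp add: algebra_simps)
            have key: "\<And>(s::int) X1 X2 X3 X4 X5 X6 X7 X8. s \<le> X1 \<Longrightarrow> X1 \<le> X2 \<Longrightarrow> X2 + X3 = X7 + X4
               \<Longrightarrow> X4 \<le> X5 \<Longrightarrow> X5 \<le> X6 \<Longrightarrow> X7 + X6 = X8 \<Longrightarrow> s + X3 \<le> X8" by linarith
            show ?thesis by (rule key[OF i1 D E1 C' B E2'])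
          qed
          then have "real s + real e * (real k + 2) \<le> real d * real e"
            by (metis (mono_tags, opaque_lifting) of_int_of_nat_eq of_int_le_iff of_int_add of_int_mult of_int_numeral)
          then have "real (\<Sum>x\<in>P. \<delta> x) + real e * real (k + 2) \<le> real d * real e"
            unfolding s_def by (simp add: add.commute)
          then show ?thesis by linarith
        qed
        then have "real e \<le> (real d * real e - real (\<Sum>x\<in>P. \<delta> x)) / real (k+2)"
          by (simp add: field_simps)
        ultimately show ?thesis using target by linarith
      qed
    qed
  qed
qed

theorem mainTheorem14:
  fixes n d c :: nat and \<F> :: "nat set set" and P :: "nat set"
  assumes "d \<ge> 50" and "1 \<le> c" and "c \<le> d"
    and "\<F> \<subseteq> Pow {1..n}" and "hereditary \<F>"
    and "int (min_deg n \<F>) \<ge> 2 ^ (d - 1) - int c + 1"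
    and "isolated_pile n d \<F> P"
  shows "(\<Sum>x\<in>P. weight \<F> x) \<ge> frakB d c * real d"
proof -
  note d50 = assms(1) and c1 = assms(2) and cd = assms(3) and FP = assms(4) and her = assms(5)
    and md = assms(6)
  from assms(7) obtain z where PS: "P \<subseteq> {1..n}" and cardP: "card P = d"
      and zP: "z \<in> P" and Nz: "nbhd \<F> z = P"
    unfolding isolated_pile_def is_pile_def by blast
  have finP: "finite P" using PS finite_subset by blast
  have finF: "finite \<F>" using FP by (meson finite_Pow_iff finite_atLeastAtMost finite_subset)
  have finFF: "\<forall>F\<in>\<F>. finite F" using FP finite_subset by blast
  define M where "M = {S \<in> Pow P. S \<notin> \<F>}"
  define ov where "ov x = card {F\<in>\<F>. x\<in>F \<and> \<not> F\<subseteq>P}" for x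
  define cost where "cost x = (\<Sum>F\<in>{F\<in>\<F>. x\<in>F \<and> \<not> F \<subseteq> P}. 1/real(card F))" for x
  define inw where "inw x = (\<Sum>F\<in>{F\<in>\<F>. x\<in>F \<and> F \<subseteq> P}. 1/real(card F))" for x
  have spl: "{F\<in>\<F>. x\<in>F} = {F\<in>\<F>. x\<in>F \<and> F \<subseteq> P} \<union> {F\<in>\<F>. x\<in>F \<and> \<not> F\<subseteq>P}" for x by auto
  have wsplit: "weight \<F> x = inw x + cost x" for x
    unfolding weight_def inw_def cost_def spl
    by (rule sum.union_disjoint) (use finF in auto)
  have degsplit: "deg \<F> x = card {F\<in>\<F>. x\<in>F \<and> F\<subseteq>P} + ov x" for x
    unfolding deg_def ov_def spl
    by (rule card_Un_disjoint) (use finF in auto)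
  have inM: "card {F\<in>\<F>. x\<in>F \<and> F\<subseteq>P} + card {S\<in>M. x\<in>S} = 2^(d-1)" if xP: "x \<in> P" for x
  proof -
    define X where "X = {S. S \<subseteq> P \<and> x \<in> S}"
    have "X \<subseteq> Pow P" unfolding X_def by auto
    then have finX: "finite X" using finP finite_subset by blast
    have "{F\<in>\<F>. x\<in>F \<and> F\<subseteq>P} = {S\<in>X. S \<in> \<F>}" unfolding X_def by auto
    moreover have "{S\<in>M. x\<in>S} = {S\<in>X. S \<notin> \<F>}" unfolding X_def M_def by auto
    ultimately show ?thesis using card_filter_split[OF finX, of "\<lambda>S. S \<in> \<F>"]
      card_subsets_containing[OF finP xP] cardP unfolding X_def by simp
  qed
  have degge: "2 ^ (d - 1) - int c + 1 \<le> int (deg \<F> x)" if xP: "x \<in> P" for x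
  proof -
    have "x \<in> {1..n}" using xP PS by auto
    moreover have "finite (deg \<F> ` {1..n})" by simp
    ultimately have "min_deg n \<F> \<le> deg \<F> x" unfolding min_deg_def by simp
    then show ?thesis using md by linarith
  qed
  have ob: "card {S\<in>M. x\<in>S} \<le> ov x + (c - 1)" if xP: "x \<in> P" for x
  proof -
    have a: "int (card {F\<in>\<F>. x\<in>F \<and> F\<subseteq>P}) + int (card {S\<in>M. x\<in>S}) = 2^(d-1)"
      using inM[OF xP] by (metis of_nat_add of_nat_numeral of_nat_power)
    have b: "int (deg \<F> x) = int (card {F\<in>\<F>. x\<in>F \<and> F\<subseteq>P}) + int (ov x)"
      using degsplit[of x] by simp
    have "int (card {S\<in>M. x\<in>S}) \<le> int (ov x) + int c - 1" using a b degge[OF xP] by linarith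
    then show ?thesis using c1 by linarith
  qed
  have oz: "ov z = 0"
  proof -
    have e: "{F\<in>\<F>. z\<in>F \<and> \<not> F\<subseteq>P} = {}" using Nz unfolding nbhd_def by blast
    show ?thesis unfolding ov_def e by simp
  qed
  have MP: "M \<subseteq> Pow P" unfolding M_def by auto
  have up: "S' \<in> M" if "S \<in> M" "S \<subseteq> S'" "S' \<subseteq> P" for S S'
  proof -
    have "S' \<notin> \<F>"
    proof
      assume "S' \<in> \<F>"
      then have "S \<in> \<F>" using her that(2) unfolding hereditary_def by blast
      then show False using that(1) unfolding M_def by simp
    qed
    then show ?thesis using that(3) unfolding M_def by simp
  qed
  have costb: "real (min (ov x) (2^k)) / real (k+2) \<le> cost x" if "x \<in> P" for x k
    unfolding ov_def cost_def by (rule cost_bound[OF finF finFF her that])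
  have C: "real (card M) + 1 - real c - (if c = d then 1/2 else 0) \<le> (\<Sum>x\<in>P. cost x)"
    by (rule comb[OF d50 c1 cd finP cardP MP up zP oz costb ob]) auto
  define I where "I = {F\<in>\<F>. F \<subseteq> P}"
  have finI: "finite I" unfolding I_def using finF by simp
  have IM: "card I + card M = 2^d"
  proof -
    have "I = {S\<in>Pow P. S \<in> \<F>}" unfolding I_def using FP by auto
    then show ?thesis using card_filter_split[of "Pow P" "\<lambda>S. S \<in> \<F>"] finP cardP
      unfolding M_def by (simp add: card_Pow)
  qed
  have emp: "{} \<in> \<F>"
  proof -
    have "d - 1 < 2^(d-1)" by (rule less_exp)
    then have "int c \<le> 2^(d-1)" using cd
      by (metis (mono_tags, opaque_lifting) Suc_pred' assms(1) le_trans less_eq_Suc_le not_less_eq_eq of_nat_le_iff of_nat_numeral of_nat_power zero_less_numeral order.strict_trans2)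
    then have "deg \<F> z \<ge> 1" using degge[OF zP] by linarith
    then have "{F\<in>\<F>. z\<in>F} \<noteq> {}" unfolding deg_def by (metis card.empty not_one_le_zero)
    then obtain F where "F \<in> \<F>" by blast
    then show ?thesis using her unfolding hereditary_def by blast
  qed
  have inside: "(\<Sum>x\<in>P. inw x) = real (card I) - 1"
  proof -
    have "(\<Sum>x\<in>P. inw x) = (\<Sum>x\<in>P. \<Sum>F\<in>{F. F \<in> I \<and> x \<in> F}. 1/real(card F))"
      unfolding inw_def I_def by (rule sum.cong) (auto intro!: sum.cong)
    also have "\<dots> = (\<Sum>F\<in>I. \<Sum>x\<in>{x. x \<in> P \<and> x \<in> F}. 1/real(card F))"
      by (rule sum.swap_restrict[OF finP finI])
    also have "\<dots> = (\<Sum>F\<in>I. if F = {} then 0 else 1)"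
    proof (rule sum.cong)
      fix F assume FI: "F \<in> I"
      then have "{x. x \<in> P \<and> x \<in> F} = F" unfolding I_def by auto
      moreover have "finite F" using FI finFF unfolding I_def by auto
      ultimately show "(\<Sum>x\<in>{x. x \<in> P \<and> x \<in> F}. 1/real(card F)) = (if F = {} then 0 else 1)"
        by simp
    qed simp
    also have "\<dots> = real (card I) - 1"
    proof -
      have eI: "{} \<in> I" using emp unfolding I_def by simp
      have "(\<Sum>F\<in>I. if F = {} then 0 else (1::real)) = (\<Sum>F\<in>I - {{}}. if F = {} then 0 else 1)"
        using sum.remove[OF finI eI, of "\<lambda>F. if F = {} then 0 else (1::real)"] by simp
      also have "\<dots> = (\<Sum>F\<in>I - {{}}. 1)" by (rule sum.cong) auto
      also have "\<dots> = real (card I) - 1"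
      proof -
        have "card I \<ge> 1" using eI finI by (metis card_0_eq empty_iff less_one not_le)
        then show ?thesis using eI finI by (simp add: of_nat_diff)
      qed
      finally show ?thesis .
    qed
    finally show ?thesis .
  qed
  have total: "(\<Sum>x\<in>P. weight \<F> x) = real (card I) - 1 + (\<Sum>x\<in>P. cost x)"
    using inside by (simp add: wsplit sum.distrib)
  have IMr: "real (card I) + real (card M) = 2^d" using IM by (metis of_nat_add of_nat_numeral of_nat_power)
  have d0: "real d > 0" using d50 by simp
  have fB: "frakB d c * real d = 2^d - real c - (if c = d then 1/2 else 0)"
  proof (cases "c = d")
    case True
    then have "\<not> (1 \<le> c \<and> c \<le> d - 1)" using d50 by simp
    then show ?thesis using True d0 unfolding frakB_def by simp
  next
    case False
    then have "1 \<le> c \<and> c \<le> d - 1" using c1 cd by simp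
    then show ?thesis using False d0 unfolding frakB_def by simp
  qed
  show ?thesis using total IMr C fB by linarith
qed


end
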